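(* Fix an integer $d\ge2$. For any $k\in\mathbb{N}$ and $q\in(0,1)$ there exists $q'<q$ such that the following holds. For every $b'\subseteq\{1,\dots,k+1\}$, with $b=b'\cap\{1,\dots,k\}$, there exists a coupling $(A,B)$ of random subsets $A,B\subseteq[d]_\star$ such that $A\preceq B$ almost surely, $A$ has law $\mathscr{A}_{q,k}(b)$, and $B$ has law $\mathscr{A}_{q',k+1}(b')$.
   Context: $[d]=\{1,\dots,d\}$, $[d]_\star=\bigcup_{n\ge0}[d]^n$ (finite sequences, $[d]^0=\{o\}$ with $o$ the empty sequence), with concatenation $u\cdot v$. For $u\in[d]_\star$, $\mathrm{prog}(u)=\{u\cdot v:v\in[d]_\star\}$ and $\tau_u:\mathrm{prog}(u)\to[d]_\star$ is the shift $\tau_u(u\cdot v)=v$. For $\hat q\in(0,1)$, $m\in\mathbb{N}$ and $c\subseteq\{1,\dots,m\}$, $\mathscr{A}_{\hat q,m}(c)$ denotes the law of the random subset of $\bigcup_{i\in c}[d]^{m-i}$ in which each point is included independently with probability $\hat q$. For $A,B\subseteq[d]_\star$, write $A\preceq B$ if there exist $u,v\in[d]_\star$ with $A\subseteq\mathrm{prog}(u)$ and $\tau_u(A)\subseteq\tau_v(B\cap\mathrm{prog}(v))$. *)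

theory Defs
  imports "HOL-Probability.Probability"
begin

definition words :: "nat \<Rightarrow> nat list set" where
  "words d = {w. set w \<subseteq> {1..d}}"

definition prog :: "nat \<Rightarrow> nat list \<Rightarrow> nat list set" where
  "prog d u = {u @ v | v. v \<in> words d}"

text \<open>The shift tau_u(u . v) = v (only meaningful on prog(u)).\<close>
definition tau :: "nat list \<Rightarrow> nat list \<Rightarrow> nat list" where
  "tau u x = drop (length u) x"

definition preceq :: "nat \<Rightarrow> nat list set \<Rightarrow> nat list set \<Rightarrow> bool" where
  "preceq d A B \<longleftrightarrow> (\<exists>u\<in>words d. \<exists>v\<in>words d.
      A \<subseteq> prog d u \<and> tau u ` A \<subseteq> tau v ` (B \<inter> prog d v))"

definition ground :: "nat \<Rightarrow> nat \<Rightarrow> nat set \<Rightarrow> nat list set" where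
  "ground d m c = (\<Union>i\<in>c. {w \<in> words d. length w = m - i})"

definition Alaw :: "nat \<Rightarrow> real \<Rightarrow> nat \<Rightarrow> nat set \<Rightarrow> nat list set pmf" where
  "Alaw d q m c = map_pmf (\<lambda>f. {w \<in> ground d m c. f w})
      (Pi_pmf (ground d m c) False (\<lambda>_. bernoulli_pmf q))"

end

theory Submission imports Defs begin

lemma exists_pmf_fun:
  fixes f :: "'a \<Rightarrow> real"
  assumes "finite F" "\<And>x. 0 \<le> f x" "\<And>x. x \<notin> F \<Longrightarrow> f x = 0" "sum f F = 1"
  shows "\<exists>p. \<forall>x. pmf p x = f x"
proof -
  have "(\<integral>\<^sup>+x. ennreal (f x) \<partial>count_space UNIV) = (\<integral>\<^sup>+x. ennreal (f x) * indicator F x \<partial>count_space UNIV)"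
    using assms(3) by (intro nn_integral_cong) (auto split: split_indicator)
  also have "\<dots> = (\<integral>\<^sup>+x. ennreal (f x) \<partial>count_space F)"
    by (simp add: nn_integral_count_space_indicator)
  also have "\<dots> = (\<Sum>x\<in>F. ennreal (f x))" using assms(1) by (simp add: nn_integral_count_space_finite)
  also have "\<dots> = 1" using assms by (simp add: sum_ennreal)
  finally have "(\<integral>\<^sup>+x. ennreal (f x) \<partial>count_space UNIV) = 1" .
  then show ?thesis using pmf_embed_pmf[of f] assms(2) by blast
qed

lemma finite_ground: "finite (ground d m c)"
proof -
  have "ground d m c \<subseteq> {xs. set xs \<subseteq> {1..d} \<and> length xs \<le> m}"
    by (auto simp: ground_def words_def)
  then show ?thesis by (rule finite_subset) (rule finite_lists_length_le, simp)
qed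

lemma set_Alaw: "set_pmf (Alaw d q m c) \<subseteq> Pow (ground d m c)"
  by (auto simp: Alaw_def)

lemma pmf_Alaw:
  assumes "0 < q" "q < 1" "S \<subseteq> ground d m c"
  shows "pmf (Alaw d q m c) S = q ^ card S * (1 - q) ^ (card (ground d m c) - card S)"
proof -
  define G where "G = ground d m c"
  define M where "M = Pi_pmf G False (\<lambda>_. bernoulli_pmf q)"
  have fG: "finite G" unfolding G_def by (rule finite_ground)
  define ind where "ind = (\<lambda>w. w \<in> S)"
  have SG: "S \<subseteq> G" using assms G_def by simp
  have setM: "set_pmf M = PiE_dflt G False (set_pmf \<circ> (\<lambda>_. bernoulli_pmf q))"
    unfolding M_def using fG by (rule set_Pi_pmf)
  have chi_in: "ind \<in> set_pmf M" using SG assms(1,2) by (auto simp: setM PiE_dflt_def ind_def)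
  have inj: "inj_on (\<lambda>f. {w \<in> G. f w}) (set_pmf M)"
  proof (rule inj_onI)
    fix f g assume f: "f \<in> set_pmf M" and g: "g \<in> set_pmf M" and e: "{w \<in> G. f w} = {w \<in> G. g w}"
    show "f = g"
    proof
      fix x show "f x = g x"
        using f g e by (cases "x \<in> G") (auto simp: setM PiE_dflt_def)
    qed
  qed
  have S_eq: "S = {w \<in> G. ind w}" using SG by (auto simp: ind_def)
  have "pmf (Alaw d q m c) S = pmf (map_pmf (\<lambda>f. {w \<in> G. f w}) M) ({w \<in> G. ind w})"
    unfolding Alaw_def M_def G_def using S_eq G_def by simp
  also have "\<dots> = pmf M ind" by (rule pmf_map_inj[OF inj chi_in])
  also have "\<dots> = (\<Prod>x\<in>G. pmf (bernoulli_pmf q) (ind x))"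
    unfolding M_def using fG SG by (intro pmf_Pi') (auto simp: ind_def)
  also have "\<dots> = (\<Prod>x\<in>G. if x \<in> S then q else 1 - q)"
    using assms(1,2) by (intro prod.cong) (auto simp: ind_def)
  also have "\<dots> = (\<Prod>x\<in>G \<inter> {x. x \<in> S}. q) * (\<Prod>x\<in>G \<inter> - {x. x \<in> S}. 1 - q)"
    using fG by (rule prod.If_cases)
  also have "\<dots> = q ^ card S * (1 - q) ^ (card G - card S)"
  proof -
    have "G \<inter> {x. x \<in> S} = S" using SG by auto
    moreover have "G \<inter> - {x. x \<in> S} = G - S" by auto
    moreover have "card (G - S) = card G - card S" using SG fG by (simp add: card_Diff_subset finite_subset)
    ultimately show ?thesis by simp
  qed
  finally show ?thesis by (simp add: G_def)
qed


lemma Cons_ground: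
  assumes "j \<in> {1..d}" "w \<in> ground d k (b' \<inter> {1..k})"
  shows "j # w \<in> ground d (k+1) b'"
  using assms by (auto simp: ground_def words_def intro!: bexI[of _ "_::nat"] Suc_diff_le)

lemma map_Cons_Alaw:
  assumes "j \<in> {1..d}"
  shows "map_pmf (\<lambda>f. {w \<in> ground d k c. f (j # w)})
           (Pi_pmf ((Cons j) ` ground d k c) False (\<lambda>_. bernoulli_pmf r)) = Alaw d r k c"
proof -
  let ?G = "ground d k c"
  have "Pi_pmf ?G False (\<lambda>_. bernoulli_pmf r) =
        map_pmf (\<lambda>g. g \<circ> Cons j) (Pi_pmf ((Cons j) ` ?G) False (\<lambda>_. bernoulli_pmf r))"
    by (rule Pi_pmf_bij_betw) (auto simp: finite_ground bij_betw_def inj_on_def)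
  then show ?thesis
    by (simp add: Alaw_def map_pmf_comp)
qed

lemma split_lemma:
  assumes "d \<ge> 2"
  shows "map_pmf (\<lambda>f. ({w \<in> ground d k (b' \<inter> {1..k}). f (1#w)}, {w \<in> ground d k (b' \<inter> {1..k}). f (2#w)}))
           (Pi_pmf (ground d (k+1) b') False (\<lambda>_. bernoulli_pmf r))
         = pair_pmf (Alaw d r k (b' \<inter> {1..k})) (Alaw d r k (b' \<inter> {1..k}))"
proof -
  define G where "G = ground d k (b' \<inter> {1..k})"
  define G' where "G' = ground d (k+1) b'"
  define G1 where "G1 = (Cons 1) ` G"
  define G2 where "G2 = (Cons 2) ` G"
  define R where "R = G' - (G1 \<union> G2)"
  define \<beta> where "\<beta> = (\<lambda>_::nat list. bernoulli_pmf r)"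
  define s1 where "s1 = (\<lambda>f::nat list \<Rightarrow> bool. {w \<in> G. f (1#w)})"
  define s2 where "s2 = (\<lambda>f::nat list \<Rightarrow> bool. {w \<in> G. f (2#w)})"
  have fG: "finite G" unfolding G_def by (rule finite_ground)
  have fG': "finite G'" unfolding G'_def by (rule finite_ground)
  have f1: "finite G1" "finite G2" using fG by (auto simp: G1_def G2_def)
  have sub: "G1 \<union> G2 \<subseteq> G'" using assms
    by (auto simp: G1_def G2_def G'_def G_def simp del: One_nat_def intro!: Cons_ground[simplified])
  have dis: "G1 \<inter> G2 = {}" by (auto simp: G1_def G2_def)
  have G'eq: "G' = (G1 \<union> G2) \<union> R" using sub by (auto simp: R_def)
  have fR: "finite R" using fG' by (simp add: R_def)
  have eq1: "Pi_pmf G' False \<beta> = map_pmf (\<lambda>(f,g) x. if x \<in> G1 \<union> G2 then f x else g x)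
          (pair_pmf (Pi_pmf (G1 \<union> G2) False \<beta>) (Pi_pmf R False \<beta>))"
    unfolding G'eq using f1 fR by (intro Pi_pmf_union) (auto simp: R_def)
  have "map_pmf (\<lambda>f. (s1 f, s2 f)) (Pi_pmf G' False \<beta>) =
       map_pmf ((\<lambda>f. (s1 f, s2 f)) \<circ> (\<lambda>(f,g) x. if x \<in> G1 \<union> G2 then f x else g x))
          (pair_pmf (Pi_pmf (G1 \<union> G2) False \<beta>) (Pi_pmf R False \<beta>))"
    by (simp only: eq1 map_pmf_comp o_def)
  also have "\<dots> = map_pmf (\<lambda>(f,g). (s1 f, s2 f)) (pair_pmf (Pi_pmf (G1 \<union> G2) False \<beta>) (Pi_pmf R False \<beta>))"
    by (intro map_pmf_cong refl) (auto simp: s1_def s2_def G1_def G2_def)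
  also have "\<dots> = map_pmf (\<lambda>f. (s1 f, s2 f)) (Pi_pmf (G1 \<union> G2) False \<beta>)"
  proof -
    have "map_pmf (\<lambda>(f,g). (s1 f, s2 f)) (pair_pmf (Pi_pmf (G1 \<union> G2) False \<beta>) (Pi_pmf R False \<beta>))
        = map_pmf (\<lambda>f. (s1 f, s2 f)) (map_pmf fst (pair_pmf (Pi_pmf (G1 \<union> G2) False \<beta>) (Pi_pmf R False \<beta>)))"
      by (simp add: map_pmf_comp case_prod_unfold)
    then show ?thesis by (simp add: map_fst_pair_pmf)
  qed
  also have "Pi_pmf (G1 \<union> G2) False \<beta> = map_pmf (\<lambda>(f,g) x. if x \<in> G1 then f x else g x)
          (pair_pmf (Pi_pmf G1 False \<beta>) (Pi_pmf G2 False \<beta>))"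
    using f1 dis by (intro Pi_pmf_union) auto
  also have "map_pmf (\<lambda>f. (s1 f, s2 f)) \<dots> =
      map_pmf ((\<lambda>f. (s1 f, s2 f)) \<circ> (\<lambda>(f,g) x. if x \<in> G1 then f x else g x)) (pair_pmf (Pi_pmf G1 False \<beta>) (Pi_pmf G2 False \<beta>))"
    by (simp only: map_pmf_comp o_def)
  also have "\<dots> = map_pmf (\<lambda>(f,g). (s1 f, s2 g)) (pair_pmf (Pi_pmf G1 False \<beta>) (Pi_pmf G2 False \<beta>))"
    by (intro map_pmf_cong refl) (auto simp: s1_def s2_def G1_def G2_def)
  also have "\<dots> = pair_pmf (map_pmf s1 (Pi_pmf G1 False \<beta>)) (map_pmf s2 (Pi_pmf G2 False \<beta>))"
    by (rule map_pair)
  also have "map_pmf s1 (Pi_pmf G1 False \<beta>) = Alaw d r k (b' \<inter> {1..k})"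
    unfolding s1_def G1_def \<beta>_def G_def using assms by (intro map_Cons_Alaw) auto
  also have "map_pmf s2 (Pi_pmf G2 False \<beta>) = Alaw d r k (b' \<inter> {1..k})"
    unfolding s2_def G2_def \<beta>_def G_def using assms by (intro map_Cons_Alaw) auto
  finally show ?thesis by (simp add: s1_def s2_def G_def G'_def \<beta>_def)
qed


lemma choose_q:
  fixes q :: real
  assumes "0 < q" "q < 1"
  shows "\<exists>q'. 0 < q' \<and> q' < q \<and> (\<forall>N\<in>{..Nmax}. (1 - q'^N) * (1-q')^N \<le> (1-q)^N)"
proof -
  have ev1: "eventually (\<lambda>x. x \<in> {0<..<q}) (at_left q)"
    using assms by (intro eventually_at_left_real) simp
  have "eventually (\<lambda>x. (1 - x^N) * (1-x)^N \<le> (1-q)^N) (at_left q)" for N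
  proof (cases "N = 0")
    case True then show ?thesis by simp
  next
    case False
    have lim: "((\<lambda>x. (1 - x^N) * (1-x)^N) \<longlongrightarrow> (1 - q^N) * (1-q)^N) (at_left q)"
      by (intro tendsto_intros)
    have "(1 - q^N) * (1-q)^N < (1-q)^N"
      using assms False by (simp add: algebra_simps)
    from order_tendstoD(2)[OF lim this] show ?thesis by eventually_elim simp
  qed
  then have "eventually (\<lambda>x. \<forall>N\<in>{..Nmax}. (1 - x^N) * (1-x)^N \<le> (1-q)^N) (at_left q)"
    by (intro eventually_ball_finite) auto
  with ev1 have "eventually (\<lambda>x. x \<in> {0<..<q} \<and> (\<forall>N\<in>{..Nmax}. (1 - x^N) * (1-x)^N \<le> (1-q)^N)) (at_left q)"
    by eventually_elim auto
  then obtain x where "x \<in> {0<..<q} \<and> (\<forall>N\<in>{..Nmax}. (1 - x^N) * (1-x)^N \<le> (1-q)^N)"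
    using eventually_happens trivial_limit_at_left_real by blast
  then show ?thesis by auto
qed


lemma ineq_key:
  fixes q q' :: real
  assumes "0 < q'" "q' < q" "q < 1" "s \<le> N" "(1 - q'^N) * (1-q')^N \<le> (1-q)^N"
  shows "(1 - q'^N) * (q'^s * (1-q')^(N-s)) \<le> q^s * (1-q)^(N-s)"
proof -
  have h1: "0 \<le> 1 - q'^N" using assms by (simp add: power_le_one)
  have "(1 - q'^N) * (1-q')^(N-s) * (1-q')^s = (1 - q'^N) * (1-q')^N"
    using assms(4) by (simp add: power_add[symmetric])
  also have "\<dots> \<le> (1-q)^N" by (rule assms(5))
  also have "\<dots> = (1-q)^(N-s) * (1-q)^s" using assms(4) by (simp add: power_add[symmetric])
  also have "\<dots> \<le> (1-q)^(N-s) * (1-q')^s"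
    using assms by (intro mult_left_mono power_mono) auto
  finally have "(1 - q'^N) * (1-q')^(N-s) \<le> (1-q)^(N-s)"
    using assms by (simp add: mult_le_cancel_right)
  then have "q'^s * ((1 - q'^N) * (1-q')^(N-s)) \<le> q'^s * (1-q)^(N-s)"
    using assms by (intro mult_left_mono) auto
  also have "\<dots> \<le> q^s * (1-q)^(N-s)"
    using assms by (intro mult_right_mono power_mono) auto
  finally show ?thesis by (simp add: algebra_simps)
qed

lemma bind_pair_if:
  "bind_pmf (pair_pmf L L) (\<lambda>(s1,s2). if s1 = G then \<mu> else return_pmf s2) =
   bind_pmf L (\<lambda>s1. if s1 = G then \<mu> else L)"
  unfolding pair_pmf_def bind_assoc_pmf
  by (intro bind_pmf_cong refl) (auto simp: bind_return_pmf bind_return_pmf')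


lemma ground_mono: "c \<subseteq> c' \<Longrightarrow> ground d m c \<subseteq> ground d m c'"
  by (auto simp: ground_def)

lemma ground_words: "ground d m c \<subseteq> words d"
  by (auto simp: ground_def)

lemma preceq_sub:
  assumes "j \<in> {1..d}" "A \<subseteq> words d" "\<And>w. w \<in> A \<Longrightarrow> j # w \<in> B"
  shows "preceq d A B"
  unfolding preceq_def
proof (intro bexI conjI)
  show "A \<subseteq> prog d []" using assms(2) by (auto simp: prog_def)
  show "tau [] ` A \<subseteq> tau [j] ` (B \<inter> prog d [j])"
  proof
    fix x assume "x \<in> tau [] ` A"
    then have x: "x \<in> A" by (simp add: tau_def)
    have "j # x \<in> B \<inter> prog d [j]" using assms x by (auto simp: prog_def)
    moreover have "x = tau [j] (j # x)" by (simp add: tau_def)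
    ultimately show "x \<in> tau [j] ` (B \<inter> prog d [j])" by blast
  qed
  show "[] \<in> words d" "[j] \<in> words d" using assms(1) by (auto simp: words_def)
qed

theorem lemma6:
  fixes d k :: nat and q :: real
  assumes "d \<ge> 2" and "0 < q" and "q < 1"
  shows "\<exists>q'::real. 0 < q' \<and> q' < q \<and>
    (\<forall>b'. b' \<subseteq> {1..k+1} \<longrightarrow>
      (\<exists>p :: (nat list set \<times> nat list set) pmf.
         map_pmf fst p = Alaw d q k (b' \<inter> {1..k}) \<and>
         map_pmf snd p = Alaw d q' (k+1) b' \<and>
         (\<forall>(A, B) \<in> set_pmf p. preceq d A B)))"
proof -
  define Nmax where "Nmax = card (ground d k {1..k})"
  obtain q' where q': "0 < q'" "q' < q" "\<forall>N\<in>{..Nmax}. (1 - q'^N) * (1-q')^N \<le> (1-q)^N"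
    using choose_q[OF assms(2,3), of Nmax] by blast
  show ?thesis
  proof (intro exI[of _ q'] conjI q'(1,2) allI impI)
    fix b' :: "nat set" assume b': "b' \<subseteq> {1..k+1}"
    define b where "b = b' \<inter> {1..k}"
    define G where "G = ground d k b"
    define G' where "G' = ground d (k+1) b'"
    define N where "N = card G"
    define Lq where "Lq = Alaw d q k b"
    define Lr where "Lr = Alaw d q' k b"
    define c0 where "c0 = q'^N"
    have fG: "finite G" unfolding G_def by (rule finite_ground)
    have NN: "N \<le> Nmax" unfolding N_def Nmax_def G_def b_def
      by (intro card_mono finite_ground ground_mono) auto
    have c0pos: "0 < c0" using q' by (simp add: c0_def)
    have q'1: "q' < 1" using q' assms by simp
    have LrG: "pmf Lr G = c0"
      unfolding Lr_def c0_def N_def G_def using q'(1) q'1 by (subst pmf_Alaw) auto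
    have out: "pmf (Alaw d r k b) S = 0" if "S \<notin> Pow G" for r S
      using set_Alaw[of d r k b] that by (auto simp: G_def set_pmf_iff)
    define g where "g = (\<lambda>S. (pmf Lq S - (1 - c0) * pmf Lr S) / c0)"
    have gnn: "0 \<le> g S" for S
    proof (cases "S \<in> Pow G")
      case True
      then have SG: "S \<subseteq> G" by simp
      have cs: "card S \<le> N" unfolding N_def using SG fG by (simp add: card_mono)
      have "(1 - c0) * pmf Lr S \<le> pmf Lq S"
      proof -
        have e1: "pmf Lr S = q'^card S * (1-q')^(N - card S)"
          unfolding Lr_def N_def G_def using SG q'(1) q'1 by (intro pmf_Alaw) (auto simp: G_def)
        have e2: "pmf Lq S = q^card S * (1-q)^(N - card S)"
          unfolding Lq_def N_def G_def using SG assms by (intro pmf_Alaw) (auto simp: G_def)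
        show ?thesis unfolding e1 e2 c0_def
          using q' assms NN cs by (intro ineq_key) auto
      qed
      then show ?thesis using c0pos by (simp add: g_def)
    next
      case False
      then show ?thesis by (simp add: g_def Lq_def Lr_def out)
    qed
    have gout: "g S = 0" if "S \<notin> Pow G" for S
      using that by (simp add: g_def Lq_def Lr_def out)
    have sq: "sum (pmf Lq) (Pow G) = 1" "sum (pmf Lr) (Pow G) = 1"
      using fG set_Alaw[of d _ k b] by (auto simp: Lq_def Lr_def G_def intro!: sum_pmf_eq_1)
    have gsum: "sum g (Pow G) = 1"
      using c0pos sq
      by (simp add: g_def sum_divide_distrib[symmetric] sum_subtractf sum_distrib_left[symmetric])
    obtain \<mu> where \<mu>: "\<And>S. pmf \<mu> S = g S"
      using exists_pmf_fun[of "Pow G" g] fG gnn gout gsum by auto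
    have set\<mu>: "set_pmf \<mu> \<subseteq> Pow G"
      using gout by (force simp: set_pmf_iff \<mu>)
    define X where "X = Pi_pmf G' False (\<lambda>_. bernoulli_pmf q')"
    define s1 where "s1 = (\<lambda>f::nat list \<Rightarrow> bool. {w \<in> G. f (1#w)})"
    define s2 where "s2 = (\<lambda>f::nat list \<Rightarrow> bool. {w \<in> G. f (2#w)})"
    define K where "K = (\<lambda>f. if s1 f = G then \<mu> else return_pmf (s2 f))"
    define p where "p = bind_pmf X (\<lambda>f. map_pmf (\<lambda>A. (A, {x \<in> G'. f x})) (K f))"
    have split: "map_pmf (\<lambda>f. (s1 f, s2 f)) X = pair_pmf Lr Lr"
      unfolding X_def s1_def s2_def G_def G'_def Lr_def b_def using split_lemma[OF assms(1)] by simp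
    show "\<exists>p. map_pmf fst p = Alaw d q k (b' \<inter> {1..k}) \<and>
         map_pmf snd p = Alaw d q' (k+1) b' \<and> (\<forall>(A, B) \<in> set_pmf p. preceq d A B)"
    proof (intro exI[of _ p] conjI)
      show "map_pmf snd p = Alaw d q' (k+1) b'"
      proof -
        have "map_pmf snd p = bind_pmf X (\<lambda>f. return_pmf {x \<in> G'. f x})"
          by (simp add: p_def map_bind_pmf map_pmf_comp map_pmf_const)
        also have "\<dots> = map_pmf (\<lambda>f. {x \<in> G'. f x}) X" by (simp add: map_pmf_def)
        finally show ?thesis by (simp add: Alaw_def X_def G'_def)
      qed
      have "map_pmf fst p = bind_pmf X K"
        by (simp add: p_def map_bind_pmf map_pmf_comp)
      also have "\<dots> = bind_pmf (map_pmf (\<lambda>f. (s1 f, s2 f)) X) (\<lambda>(s1,s2). if s1 = G then \<mu> else return_pmf s2)"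
        by (simp add: bind_map_pmf K_def)
      also have "\<dots> = bind_pmf Lr (\<lambda>s. if s = G then \<mu> else Lr)"
        unfolding split by (rule bind_pair_if)
      also have "\<dots> = Lq"
      proof (rule pmf_eqI)
        fix S
        have "pmf (bind_pmf Lr (\<lambda>s. if s = G then \<mu> else Lr)) S =
              (\<Sum>s\<in>Pow G. pmf (if s = G then \<mu> else Lr) S * pmf Lr s)"
          unfolding pmf_bind
          using set_Alaw[of d q' k b] fG
          by (intro integral_measure_pmf_real) (auto simp: Lr_def G_def)
        also have "\<dots> = pmf \<mu> S * pmf Lr G + (\<Sum>s\<in>Pow G - {G}. pmf Lr S * pmf Lr s)"
          using fG by (subst sum.remove[of _ G]) (auto intro!: sum.cong)
        also have "(\<Sum>s\<in>Pow G - {G}. pmf Lr S * pmf Lr s) = pmf Lr S * (1 - c0)"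
          using fG sq(2) LrG by (simp add: sum_distrib_left[symmetric] sum_diff1)
        also have "pmf \<mu> S * pmf Lr G + pmf Lr S * (1 - c0) = pmf Lq S"
          using c0pos by (simp add: \<mu> g_def LrG)
        finally show "pmf (bind_pmf Lr (\<lambda>s. if s = G then \<mu> else Lr)) S = pmf Lq S" .
      qed
      finally show "map_pmf fst p = Alaw d q k (b' \<inter> {1..k})" by (simp add: Lq_def b_def)
      show "\<forall>(A, B) \<in> set_pmf p. preceq d A B"
      proof (clarify)
        fix A B assume "(A, B) \<in> set_pmf p"
        then obtain f where f: "f \<in> set_pmf X" and AB: "A \<in> set_pmf (K f)" and B: "B = {x \<in> G'. f x}"
          by (auto simp: p_def)
        have Gw: "G \<subseteq> words d" unfolding G_def by (rule ground_words)
        have mem: "j # w \<in> G'" if "w \<in> G" "j \<in> {1..d}" for j w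
          using that Cons_ground[of j d w k b'] by (simp add: G_def G'_def b_def)
        show "preceq d A B"
        proof (cases "s1 f = G")
          case True
          then have "A \<subseteq> G" using AB set\<mu> by (auto simp: K_def)
          moreover have "1 # w \<in> B" if "w \<in> G" for w
            using True that mem[of w 1] assms(1) by (auto simp: B s1_def)
          ultimately show ?thesis using Gw assms(1)
            by (intro preceq_sub[of 1]) auto
        next
          case False
          then have A: "A = s2 f" using AB by (simp add: K_def)
          have "A \<subseteq> G" by (simp add: A s2_def)
          moreover have "2 # w \<in> B" if "w \<in> A" for w
            using that mem[of w 2] assms(1) by (auto simp: A B s2_def)
          ultimately show ?thesis using Gw assms(1)
            by (intro preceq_sub[of 2]) auto
        qed
      qed
    qed
  qed
qed

end
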